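(* Let $L>0,\alpha>0$. For any $b\in\Lambda(\alpha)$ and any $\psi\in E_L$, $\int_{[0,L)}\psi'(x)^2dx-\int_{[0,L)}b(x)\psi(x)^2dx\ge-(\alpha+\alpha^2L^2)\int_{[0,L)}\psi(x)^2dx$.
   Context: $\Lambda(\alpha)$: $b\in C^1(\mathbb R)$, $b\ge0$, $L$-periodic, $\int_0^Lb=\alpha L$. $H^1_{per}=\{\varphi\in H^1_{loc}(\mathbb R):\varphi(x+L)=\varphi(x)\}$ and $E_L=\{\psi\in H^1_{per}:\psi(x)>0 \text{ for all }x\}$. *)

theory Defs
  imports "HOL-Analysis.Analysis"
begin

definition Lambda :: "real \<Rightarrow> real \<Rightarrow> (real \<Rightarrow> real) set" where
  "Lambda L \<alpha> = {b. b C1_differentiable_on UNIV \<and> (\<forall>x. b x \<ge> 0) \<and>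
      (\<forall>x. b (x + L) = b x) \<and> (LINT x:{0..L}|lborel. b x) = \<alpha> * L}"

text \<open>H^1_loc(R) in one dimension: psi is (the continuous representative of) an H^1_loc
  function with weak derivative dpsi, i.e. dpsi and psi are locally square integrable and
  psi is the indefinite integral of dpsi (local absolute continuity).\<close>
definition H1_loc :: "(real \<Rightarrow> real) \<Rightarrow> (real \<Rightarrow> real) \<Rightarrow> bool" where
  "H1_loc \<psi> d\<psi> \<longleftrightarrow>
     (\<forall>a b. set_integrable lborel {a..b} d\<psi> \<and>
            set_integrable lborel {a..b} (\<lambda>x. (d\<psi> x)\<^sup>2) \<and>
            set_integrable lborel {a..b} (\<lambda>x. (\<psi> x)\<^sup>2) \<and>
            (a \<le> b \<longrightarrow> \<psi> b - \<psi> a = (LINT x:{a..b}|lborel. d\<psi> x)))"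

definition H1_per :: "real \<Rightarrow> (real \<Rightarrow> real) \<Rightarrow> (real \<Rightarrow> real) \<Rightarrow> bool" where
  "H1_per L \<psi> d\<psi> \<longleftrightarrow> H1_loc \<psi> d\<psi> \<and> (\<forall>x. \<psi> (x + L) = \<psi> x)"

definition E_L :: "real \<Rightarrow> (real \<Rightarrow> real) \<Rightarrow> (real \<Rightarrow> real) \<Rightarrow> bool" where
  "E_L L \<psi> d\<psi> \<longleftrightarrow> H1_per L \<psi> d\<psi> \<and> (\<forall>x. \<psi> x > 0)"

end

theory Submission
  imports Defs
begin

lemma inI: "n \<ge> nat \<lceil>\<bar>x\<bar>\<rceil> \<Longrightarrow> x \<in> {- real n..real n}"
proof -
  assume "n \<ge> nat \<lceil>\<bar>x\<bar>\<rceil>"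
  then have "real n \<ge> \<bar>x\<bar>" by linarith
  then show ?thesis by auto
qed

lemma meas_d:
  assumes "H1_loc \<psi> d"
  shows "d \<in> borel_measurable lborel"
proof (rule borel_measurable_LIMSEQ_real)
  let ?u = "\<lambda>i::nat. \<lambda>x. indicator {- real i..real i} x *\<^sub>R d x"
  show "?u i \<in> borel_measurable lborel" for i
    using assms unfolding H1_loc_def set_integrable_def by (blast intro: borel_measurable_integrable)
  show "(\<lambda>i. ?u i x) \<longlonglongrightarrow> d x" for x
  proof (rule tendsto_eventually)
    show "\<forall>\<^sub>F i in sequentially. ?u i x = d x"
      unfolding eventually_sequentially
      using inI[of x] by (intro exI[of _ "nat \<lceil>\<bar>x\<bar>\<rceil>"]) auto
  qed
qed

lemma meas_psi:
  assumes "H1_loc \<psi> d" "\<forall>x. \<psi> x > 0"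
  shows "\<psi> \<in> borel_measurable lborel"
proof (rule borel_measurable_LIMSEQ_real)
  let ?u = "\<lambda>i::nat. \<lambda>x. sqrt (indicator {- real i..real i} x *\<^sub>R (\<psi> x)\<^sup>2)"
  have m: "(\<lambda>x. indicator {- real i..real i} x *\<^sub>R (\<psi> x)\<^sup>2) \<in> borel_measurable lborel" for i
    using assms unfolding H1_loc_def set_integrable_def by (blast intro: borel_measurable_integrable)
  show "?u i \<in> borel_measurable lborel" for i
    using m[of i] by measurable
  show "(\<lambda>i. ?u i x) \<longlonglongrightarrow> \<psi> x" for x
  proof (rule tendsto_eventually)
    show "\<forall>\<^sub>F i in sequentially. ?u i x = \<psi> x"
      unfolding eventually_sequentially
      using assms(2)[rule_format, of x]
      using inI[of x] by (intro exI[of _ "nat \<lceil>\<bar>x\<bar>\<rceil>"]) auto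
  qed
qed

lemma set_int_nonneg:
  fixes f :: "real \<Rightarrow> real"
  assumes "\<And>x. x \<in> A \<Longrightarrow> 0 \<le> f x" "set_integrable lborel A f"
  shows "0 \<le> (LINT x:A|lborel. f x)"
proof -
  have "(LINT x:A|lborel. (0::real)) \<le> (LINT x:A|lborel. f x)"
    by (rule set_integral_mono) (use assms in \<open>auto simp: set_integrable_def\<close>)
  then show ?thesis by simp
qed

lemma split_int:
  fixes f :: "real \<Rightarrow> real"
  assumes "set_integrable lborel {a..c} f" "a \<le> m" "m \<le> c"
  shows "(LINT x:{a..c}|lborel. f x) = (LINT x:{a..m}|lborel. f x) + (LINT x:{m..c}|lborel. f x)"
proof -
  have e: "{a..c} = {a..m} \<union> {m..c}" using assms by auto
  have "(LINT x:{a..m} \<union> {m..c}|lborel. f x) = (LINT x:{a..m}|lborel. f x) + (LINT x:{m..c}|lborel. f x)"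
  proof (rule set_integral_Un_AE)
    show "AE x in lborel. \<not> (x \<in> {a..m} \<and> x \<in> {m..c})"
      using AE_lborel_singleton[of m] by eventually_elim auto
    show "set_integrable lborel {a..m} f" "set_integrable lborel {m..c} f"
      using assms by (auto intro: set_integrable_subset)
  qed auto
  then show ?thesis using e by simp
qed

lemma mono_sub:
  fixes f :: "real \<Rightarrow> real"
  assumes "set_integrable lborel {a..c} f" "\<And>x. x \<in> {a..c} \<Longrightarrow> 0 \<le> f x"
    "a \<le> a'" "a' \<le> c'" "c' \<le> c"
  shows "(LINT x:{a'..c'}|lborel. f x) \<le> (LINT x:{a..c}|lborel. f x)"
proof -
  have i1: "set_integrable lborel {a'..c} f" using assms by (auto intro: set_integrable_subset)
  have "(LINT x:{a..c}|lborel. f x) = (LINT x:{a..a'}|lborel. f x) + (LINT x:{a'..c}|lborel. f x)"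
    using assms by (intro split_int) auto
  moreover have "(LINT x:{a'..c}|lborel. f x) = (LINT x:{a'..c'}|lborel. f x) + (LINT x:{c'..c}|lborel. f x)"
    using assms i1 by (intro split_int) auto
  moreover have "0 \<le> (LINT x:{a..a'}|lborel. f x)"
    using assms by (intro set_int_nonneg) (auto intro: set_integrable_subset)
  moreover have "0 \<le> (LINT x:{c'..c}|lborel. f x)"
    using assms by (intro set_int_nonneg) (auto intro: set_integrable_subset)
  ultimately show ?thesis by linarith
qed

lemma cs_alg:
  fixes W Q h :: real
  assumes "W \<ge> 0" "Q \<ge> 0" "h \<ge> 0" "\<And>l. l > 0 \<Longrightarrow> 2 * l * W \<le> l\<^sup>2 * Q + h"
  shows "W\<^sup>2 \<le> h * Q"
proof (cases "W = 0")
  case True then show ?thesis using assms by simp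
next
  case False
  then have W: "W > 0" using assms by simp
  show ?thesis
  proof (cases "Q = 0")
    case True
    have "h/W \<ge> 0" using W assms by simp
    then have p: "h/W + 1 > 0" by linarith
    have "2 * (h / W + 1) * W \<le> (h/W+1)\<^sup>2 * Q + h"
      by (rule assms(4)[OF p])
    then have "2 * h + 2 * W \<le> h" using True W by (simp add: algebra_simps)
    then show ?thesis using W assms by simp
  next
    case False
    then have Q: "Q > 0" using assms by simp
    have "2 * (W/Q) * W \<le> (W/Q)\<^sup>2 * Q + h" using assms(4)[of "W/Q"] W Q by simp
    then have "2 * W\<^sup>2 / Q \<le> W\<^sup>2 / Q + h" using Q by (simp add: power2_eq_square field_simps)
    then have "W\<^sup>2 / Q \<le> h" by simp
    then show ?thesis using Q by (simp add: field_simps mult.commute)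
  qed
qed


context
  fixes \<psi> d :: "real \<Rightarrow> real"
  assumes H: "H1_loc \<psi> d" and pos: "\<forall>x. \<psi> x > 0"
begin

lemma mpsi[measurable]: "\<psi> \<in> borel_measurable lborel" using meas_psi H pos by blast
lemma md[measurable]: "d \<in> borel_measurable lborel" using meas_d H by blast

lemma int_d: "set_integrable lborel {a..c} d" using H unfolding H1_loc_def by blast
lemma int_d2: "set_integrable lborel {a..c} (\<lambda>x. (d x)\<^sup>2)" using H unfolding H1_loc_def by blast
lemma int_p2: "set_integrable lborel {a..c} (\<lambda>x. (\<psi> x)\<^sup>2)" using H unfolding H1_loc_def by blast
lemma ftc: "a \<le> c \<Longrightarrow> \<psi> c - \<psi> a = (LINT x:{a..c}|lborel. d x)" using H unfolding H1_loc_def by blast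
lemma int_ad: "set_integrable lborel {a..c} (\<lambda>x. \<bar>d x\<bar>)" using int_d by (rule set_integrable_abs)

lemma int_F: "set_integrable lborel {a..c} (\<lambda>x. 2 * \<psi> x * \<bar>d x\<bar>)"
proof (rule set_integrable_bound)
  show "set_integrable lborel {a..c} (\<lambda>x. (\<psi> x)\<^sup>2 + (d x)\<^sup>2)"
    using int_p2 int_d2 by (rule set_integral_add)
  show "set_borel_measurable lborel {a..c} (\<lambda>x. 2 * \<psi> x * \<bar>d x\<bar>)"
    unfolding set_borel_measurable_def by measurable
  show "AE x in lborel. x \<in> {a..c} \<longrightarrow> norm (2 * \<psi> x * \<bar>d x\<bar>) \<le> norm ((\<psi> x)\<^sup>2 + (d x)\<^sup>2)"
  proof (rule AE_I2, rule impI)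
    fix x
    have "0 \<le> (\<psi> x - \<bar>d x\<bar>)\<^sup>2" by simp
    then have "2 * \<psi> x * \<bar>d x\<bar> \<le> (\<psi> x)\<^sup>2 + (d x)\<^sup>2" by (simp add: power2_eq_square algebra_simps)
    then show "norm (2 * \<psi> x * \<bar>d x\<bar>) \<le> norm ((\<psi> x)\<^sup>2 + (d x)\<^sup>2)"
      using pos[rule_format, of x] by (simp add: abs_mult)
  qed
qed

lemma abs_diff_le: "a \<le> c \<Longrightarrow> \<bar>\<psi> c - \<psi> a\<bar> \<le> (LINT x:{a..c}|lborel. \<bar>d x\<bar>)"
proof -
  assume ac: "a \<le> c"
  have "(LINT x:{a..c}|lborel. d x) \<le> (LINT x:{a..c}|lborel. \<bar>d x\<bar>)"
    by (rule set_integral_mono[OF int_d int_ad]) simp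
  moreover have "(LINT x:{a..c}|lborel. - d x) \<le> (LINT x:{a..c}|lborel. \<bar>d x\<bar>)"
  proof (rule set_integral_mono[OF _ int_ad])
    show "set_integrable lborel {a..c} (\<lambda>x. - d x)"
      using int_d[of a c] unfolding set_integrable_def by (simp add: integrable_minus)
  qed simp
  ultimately show ?thesis using ftc[OF ac] by (simp add: set_integral_uminus[OF int_d])
qed

lemma cs: "a \<le> c \<Longrightarrow> (LINT x:{a..c}|lborel. \<bar>d x\<bar>)\<^sup>2 \<le> (c - a) * (LINT x:{a..c}|lborel. (d x)\<^sup>2)"
proof -
  assume ac: "a \<le> c"
  show ?thesis
  proof (rule cs_alg)
    show "0 \<le> (LINT x:{a..c}|lborel. \<bar>d x\<bar>)" by (rule set_int_nonneg[OF _ int_ad]) simp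
    show "0 \<le> (LINT x:{a..c}|lborel. (d x)\<^sup>2)" by (rule set_int_nonneg[OF _ int_d2]) simp
    show "0 \<le> c - a" using ac by simp
    fix l :: real assume l: "l > 0"
    have ic: "set_integrable lborel {a..c} (\<lambda>x. (1::real))"
      by (rule borel_integrable_atLeastAtMost') simp
    have "(LINT x:{a..c}|lborel. 2 * l * \<bar>d x\<bar>) \<le> (LINT x:{a..c}|lborel. l\<^sup>2 * (d x)\<^sup>2 + 1)"
    proof (rule set_integral_mono)
      show "set_integrable lborel {a..c} (\<lambda>x. 2 * l * \<bar>d x\<bar>)" using int_ad by simp
      show "set_integrable lborel {a..c} (\<lambda>x. l\<^sup>2 * (d x)\<^sup>2 + 1)"
        using int_d2 ic by (intro set_integral_add) auto
      fix x
      have "0 \<le> (l * \<bar>d x\<bar> - 1)\<^sup>2" by simp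
      then show "2 * l * \<bar>d x\<bar> \<le> l\<^sup>2 * (d x)\<^sup>2 + 1" by (simp add: power2_eq_square algebra_simps)
    qed
    also have "\<dots> = l\<^sup>2 * (LINT x:{a..c}|lborel. (d x)\<^sup>2) + (c - a)"
      using int_d2 ic ac by (subst set_integral_add) (auto simp: set_integral_const)
    finally show "2 * l * (LINT x:{a..c}|lborel. \<bar>d x\<bar>) \<le> l\<^sup>2 * (LINT x:{a..c}|lborel. (d x)\<^sup>2) + (c - a)"
      by simp
  qed
qed


lemma step:
  assumes ac: "a \<le> c"
  shows "\<bar>(\<psi> c)\<^sup>2 - (\<psi> a)\<^sup>2\<bar> \<le> (LINT x:{a..c}|lborel. 2 * \<psi> x * \<bar>d x\<bar>)
            + 2 * (c - a) * (LINT x:{a..c}|lborel. (d x)\<^sup>2)"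
proof -
  define W where "W = (LINT x:{a..c}|lborel. \<bar>d x\<bar>)"
  have W0: "W \<ge> 0" unfolding W_def by (rule set_int_nonneg[OF _ int_ad]) simp
  have t: "\<psi> a + \<psi> c \<le> 2 * \<psi> t + 2 * W" if t: "t \<in> {a..c}" for t
  proof -
    have "\<bar>\<psi> t - \<psi> a\<bar> \<le> (LINT x:{a..t}|lborel. \<bar>d x\<bar>)" using t by (intro abs_diff_le) auto
    also have "\<dots> \<le> W" unfolding W_def using t by (intro mono_sub[OF int_ad]) auto
    finally have 1: "\<bar>\<psi> t - \<psi> a\<bar> \<le> W" .
    have "\<bar>\<psi> c - \<psi> t\<bar> \<le> (LINT x:{t..c}|lborel. \<bar>d x\<bar>)" using t by (intro abs_diff_le) auto
    also have "\<dots> \<le> W" unfolding W_def using t by (intro mono_sub[OF int_ad]) auto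
    finally have 2: "\<bar>\<psi> c - \<psi> t\<bar> \<le> W" .
    show ?thesis using 1 2 by linarith
  qed
  have pa: "\<psi> a > 0" "\<psi> c > 0" using pos by auto
  have "\<bar>(\<psi> c)\<^sup>2 - (\<psi> a)\<^sup>2\<bar> = \<bar>\<psi> c - \<psi> a\<bar> * (\<psi> a + \<psi> c)"
  proof -
    have "(\<psi> c)\<^sup>2 - (\<psi> a)\<^sup>2 = (\<psi> c - \<psi> a) * (\<psi> a + \<psi> c)"
      by (simp add: power2_eq_square algebra_simps)
    then show ?thesis using pa by (simp add: abs_mult)
  qed
  also have "\<dots> \<le> W * (\<psi> a + \<psi> c)"
    using abs_diff_le[OF ac] pa unfolding W_def by (intro mult_right_mono) auto
  also have "\<dots> = (LINT x:{a..c}|lborel. \<bar>d x\<bar> * (\<psi> a + \<psi> c))"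
    unfolding W_def by simp
  also have "\<dots> \<le> (LINT x:{a..c}|lborel. 2 * \<psi> x * \<bar>d x\<bar> + 2 * W * \<bar>d x\<bar>)"
  proof (rule set_integral_mono)
    show "set_integrable lborel {a..c} (\<lambda>x. \<bar>d x\<bar> * (\<psi> a + \<psi> c))" using int_ad by simp
    show "set_integrable lborel {a..c} (\<lambda>x. 2 * \<psi> x * \<bar>d x\<bar> + 2 * W * \<bar>d x\<bar>)"
      using int_F int_ad by (intro set_integral_add) auto
    fix x assume "x \<in> {a..c}"
    then have "\<bar>d x\<bar> * (\<psi> a + \<psi> c) \<le> \<bar>d x\<bar> * (2 * \<psi> x + 2 * W)"
      using t by (intro mult_left_mono) auto
    then show "\<bar>d x\<bar> * (\<psi> a + \<psi> c) \<le> 2 * \<psi> x * \<bar>d x\<bar> + 2 * W * \<bar>d x\<bar>"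
      by (simp add: algebra_simps)
  qed
  also have "\<dots> = (LINT x:{a..c}|lborel. 2 * \<psi> x * \<bar>d x\<bar>) + 2 * W * W"
    using int_F int_ad unfolding W_def by (subst set_integral_add) auto
  also have "\<dots> \<le> (LINT x:{a..c}|lborel. 2 * \<psi> x * \<bar>d x\<bar>) + 2 * (c - a) * (LINT x:{a..c}|lborel. (d x)\<^sup>2)"
    using cs[OF ac] unfolding W_def power2_eq_square by linarith
  finally show ?thesis .
qed

lemma multi:
  assumes h: "h \<ge> 0"
  shows "\<bar>(\<psi> (a + real k * h))\<^sup>2 - (\<psi> a)\<^sup>2\<bar> \<le> (LINT x:{a..a + real k * h}|lborel. 2 * \<psi> x * \<bar>d x\<bar>)
            + 2 * h * (LINT x:{a..a + real k * h}|lborel. (d x)\<^sup>2)"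
proof (induction k)
  case 0
  have "(LINT x:{a..a}|lborel. 2 * \<psi> x * \<bar>d x\<bar>) \<ge> 0" "(LINT x:{a..a}|lborel. (d x)\<^sup>2) \<ge> 0"
    by (auto intro!: set_int_nonneg int_F int_d2 simp: pos less_imp_le)
  then show ?case using h by simp
next
  case (Suc k)
  define m where "m = a + real k * h"
  define c where "c = a + real (Suc k) * h"
  have mc: "a \<le> m" "m \<le> c" "c - m = h" using h unfolding m_def c_def by (auto simp: algebra_simps)
  have "\<bar>(\<psi> c)\<^sup>2 - (\<psi> a)\<^sup>2\<bar> \<le> \<bar>(\<psi> m)\<^sup>2 - (\<psi> a)\<^sup>2\<bar> + \<bar>(\<psi> c)\<^sup>2 - (\<psi> m)\<^sup>2\<bar>" by linarith
  also have "\<dots> \<le> ((LINT x:{a..m}|lborel. 2 * \<psi> x * \<bar>d x\<bar>) + 2 * h * (LINT x:{a..m}|lborel. (d x)\<^sup>2))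
     + ((LINT x:{m..c}|lborel. 2 * \<psi> x * \<bar>d x\<bar>) + 2 * h * (LINT x:{m..c}|lborel. (d x)\<^sup>2))"
    using Suc.IH step[of m c] mc unfolding m_def by (intro add_mono) auto
  also have "\<dots> = (LINT x:{a..c}|lborel. 2 * \<psi> x * \<bar>d x\<bar>) + 2 * h * (LINT x:{a..c}|lborel. (d x)\<^sup>2)"
    using split_int[OF int_F mc(1,2)] split_int[OF int_d2 mc(1,2)] by (simp add: algebra_simps)
  finally show ?case unfolding c_def .
qed


lemma bound:
  assumes "a \<le> c" "0 \<le> a" "c \<le> L" "n > 0"
  shows "\<bar>(\<psi> c)\<^sup>2 - (\<psi> a)\<^sup>2\<bar> \<le> (LINT x:{0..L}|lborel. 2 * \<psi> x * \<bar>d x\<bar>)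
            + 2 * (L / real n) * (LINT x:{0..L}|lborel. (d x)\<^sup>2)"
proof -
  define h where "h = (c - a) / real n"
  have h: "h \<ge> 0" "a + real n * h = c" "h \<le> L / real n"
  proof -
    have "c - a \<le> L" using assms by simp
    then show "h \<ge> 0" "a + real n * h = c" "h \<le> L / real n"
      using assms unfolding h_def by (auto simp: divide_right_mono)
  qed
  have "\<bar>(\<psi> c)\<^sup>2 - (\<psi> a)\<^sup>2\<bar> \<le> (LINT x:{a..c}|lborel. 2 * \<psi> x * \<bar>d x\<bar>)
            + 2 * h * (LINT x:{a..c}|lborel. (d x)\<^sup>2)"
    using multi[OF h(1), of a n] h(2) by simp
  also have "\<dots> \<le> (LINT x:{0..L}|lborel. 2 * \<psi> x * \<bar>d x\<bar>)
            + 2 * (L / real n) * (LINT x:{0..L}|lborel. (d x)\<^sup>2)"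
  proof (rule add_mono)
    show "(LINT x:{a..c}|lborel. 2 * \<psi> x * \<bar>d x\<bar>) \<le> (LINT x:{0..L}|lborel. 2 * \<psi> x * \<bar>d x\<bar>)"
      using assms pos by (intro mono_sub[OF int_F]) (auto simp: less_imp_le)
    have "0 \<le> (LINT x:{a..c}|lborel. (d x)\<^sup>2)" by (rule set_int_nonneg[OF _ int_d2]) simp
    moreover have "(LINT x:{a..c}|lborel. (d x)\<^sup>2) \<le> (LINT x:{0..L}|lborel. (d x)\<^sup>2)"
      using assms by (intro mono_sub[OF int_d2]) auto
    ultimately show "2 * h * (LINT x:{a..c}|lborel. (d x)\<^sup>2) \<le> 2 * (L / real n) * (LINT x:{0..L}|lborel. (d x)\<^sup>2)"
      using h by (intro mult_mono) auto
  qed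
  finally show ?thesis .
qed

lemma bound2:
  assumes "x \<in> {0..L}" "y \<in> {0..L}" "n > 0"
  shows "(\<psi> x)\<^sup>2 \<le> (\<psi> y)\<^sup>2 + ((LINT x:{0..L}|lborel. 2 * \<psi> x * \<bar>d x\<bar>)
            + 2 * (L / real n) * (LINT x:{0..L}|lborel. (d x)\<^sup>2))"
proof (cases "x \<le> y")
  case True
  then show ?thesis using bound[of x y L n] assms by auto
next
  case False
  then show ?thesis using bound[of y x L n] assms by auto
qed

end


lemma Icc_Ico:
  fixes f :: "real \<Rightarrow> real"
  shows "(LINT x:{0..<L}|lborel. f x) = (LINT x:{0..L}|lborel. f x)"
  by (rule set_integral_discrete_difference[where X="{L}"]) auto

theorem mainTheorem14:
  fixes L \<alpha> :: real and b \<psi> d\<psi> :: "real \<Rightarrow> real"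
  assumes "L > 0" and "\<alpha> > 0"
    and "b \<in> Lambda L \<alpha>"
    and "E_L L \<psi> d\<psi>"
  shows "(LINT x:{0..<L}|lborel. (d\<psi> x)\<^sup>2) - (LINT x:{0..<L}|lborel. b x * (\<psi> x)\<^sup>2)
           \<ge> - (\<alpha> + \<alpha>\<^sup>2 * L\<^sup>2) * (LINT x:{0..<L}|lborel. (\<psi> x)\<^sup>2)"
proof -
  have H: "H1_loc \<psi> d\<psi>" and pos: "\<forall>x. \<psi> x > 0" using assms(4) unfolding E_L_def H1_per_def by auto
  have C1: "b C1_differentiable_on UNIV" and b0: "\<And>x. b x \<ge> 0"
    and bint: "(LINT x:{0..L}|lborel. b x) = \<alpha> * L"
    using assms(3) unfolding Lambda_def by auto
  have bc: "continuous_on UNIV b"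
    using C1 unfolding C1_differentiable_on_eq
    by (intro differentiable_imp_continuous_on) (auto simp: differentiable_on_def)
  have [measurable]: "b \<in> borel_measurable lborel"
    using borel_measurable_continuous_onI[OF bc] by simp
  note [measurable] = mpsi[OF H pos] md[OF H pos]
  have "\<exists>x\<in>{0..L}. \<forall>y\<in>{0..L}. b y \<le> b x"
    by (rule continuous_attains_sup) (use assms(1) bc in \<open>auto intro: continuous_on_subset\<close>)
  then obtain M where M: "\<And>x. x \<in> {0..L} \<Longrightarrow> b x \<le> M" by blast
  have ib: "set_integrable lborel {0..L} b"
    by (rule borel_integrable_atLeastAtMost') (rule continuous_on_subset[OF bc], simp)
  have ibp: "set_integrable lborel {0..L} (\<lambda>x. b x * (\<psi> x)\<^sup>2)"
  proof (rule set_integrable_bound)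
    show "set_integrable lborel {0..L} (\<lambda>x. M * (\<psi> x)\<^sup>2)" using int_p2[OF H pos] by simp
    show "set_borel_measurable lborel {0..L} (\<lambda>x. b x * (\<psi> x)\<^sup>2)"
      unfolding set_borel_measurable_def by measurable
    show "AE x in lborel. x \<in> {0..L} \<longrightarrow> norm (b x * (\<psi> x)\<^sup>2) \<le> norm (M * (\<psi> x)\<^sup>2)"
    proof (rule AE_I2, rule impI)
      fix x assume x: "x \<in> {0..L}"
      have "b x * (\<psi> x)\<^sup>2 \<le> M * (\<psi> x)\<^sup>2" using M[OF x] by (intro mult_right_mono) auto
      then show "norm (b x * (\<psi> x)\<^sup>2) \<le> norm (M * (\<psi> x)\<^sup>2)" using b0[of x] by simp
    qed
  qed
  define I where "I = (LINT x:{0..L}|lborel. b x * (\<psi> x)\<^sup>2)"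
  define A where "A = (LINT x:{0..L}|lborel. (\<psi> x)\<^sup>2)"
  define B where "B = (LINT x:{0..L}|lborel. (d\<psi> x)\<^sup>2)"
  define J where "J = (LINT x:{0..L}|lborel. 2 * \<psi> x * \<bar>d\<psi> x\<bar>)"
  have B0: "B \<ge> 0" unfolding B_def by (rule set_int_nonneg[OF _ int_d2[OF H pos]]) simp
  have ic: "set_integrable lborel {0..L} (\<lambda>x. (c::real))" for c
    by (rule borel_integrable_atLeastAtMost') simp
  have key: "I \<le> \<alpha> * A + \<alpha> * L * (J + 2 * (L / real n) * B)" if n: "n > 0" for n :: nat
  proof -
    define K where "K = J + 2 * (L / real n) * B"
    have Iy: "I \<le> \<alpha> * L * (\<psi> y)\<^sup>2 + \<alpha> * L * K" if y: "y \<in> {0..L}" for y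
    proof -
      have "I \<le> (LINT x:{0..L}|lborel. b x * ((\<psi> y)\<^sup>2 + K))"
        unfolding I_def
      proof (rule set_integral_mono[OF ibp])
        show "set_integrable lborel {0..L} (\<lambda>x. b x * ((\<psi> y)\<^sup>2 + K))" using ib by simp
        fix x assume x: "x \<in> {0..L}"
        show "b x * (\<psi> x)\<^sup>2 \<le> b x * ((\<psi> y)\<^sup>2 + K)"
          using bound2[OF H pos x y n] b0[of x] unfolding K_def J_def B_def
          by (intro mult_left_mono) auto
      qed
      also have "\<dots> = (LINT x:{0..L}|lborel. b x) * ((\<psi> y)\<^sup>2 + K)"
        by (rule set_integral_mult_left)
      also have "\<dots> = \<alpha> * L * (\<psi> y)\<^sup>2 + \<alpha> * L * K"
        using bint by (simp add: algebra_simps)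
      finally show ?thesis .
    qed
    have "L * I = (LINT y:{0..L}|lborel. I)" using assms(1) by (simp add: set_integral_const)
    also have "\<dots> \<le> (LINT y:{0..L}|lborel. \<alpha> * L * (\<psi> y)\<^sup>2 + \<alpha> * L * K)"
      by (rule set_integral_mono[OF ic]) (use Iy int_p2[OF H pos] ic in \<open>auto intro: set_integral_add\<close>)
    also have "\<dots> = \<alpha> * L * A + \<alpha> * L * K * L"
      using int_p2[OF H pos] ic assms(1) unfolding A_def by (subst set_integral_add) (auto simp: set_integral_const)
    finally have "L * I \<le> L * (\<alpha> * A + \<alpha> * L * K)" by (simp add: algebra_simps)
    then show ?thesis using assms(1) unfolding K_def by simp
  qed
  have JB: "\<alpha> * L * J \<le> \<alpha>\<^sup>2 * L\<^sup>2 * A + B"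
  proof -
    have "\<alpha> * L * J = (LINT x:{0..L}|lborel. \<alpha> * L * (2 * \<psi> x * \<bar>d\<psi> x\<bar>))" unfolding J_def by simp
    also have "\<dots> \<le> (LINT x:{0..L}|lborel. \<alpha>\<^sup>2 * L\<^sup>2 * (\<psi> x)\<^sup>2 + (d\<psi> x)\<^sup>2)"
    proof (rule set_integral_mono)
      show "set_integrable lborel {0..L} (\<lambda>x. \<alpha> * L * (2 * \<psi> x * \<bar>d\<psi> x\<bar>))"
        using int_F[OF H pos] by simp
      show "set_integrable lborel {0..L} (\<lambda>x. \<alpha>\<^sup>2 * L\<^sup>2 * (\<psi> x)\<^sup>2 + (d\<psi> x)\<^sup>2)"
        using int_p2[OF H pos] int_d2[OF H pos] by (intro set_integral_add) auto
      fix x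
      have "0 \<le> (\<alpha> * L * \<psi> x - \<bar>d\<psi> x\<bar>)\<^sup>2" by simp
      then show "\<alpha> * L * (2 * \<psi> x * \<bar>d\<psi> x\<bar>) \<le> \<alpha>\<^sup>2 * L\<^sup>2 * (\<psi> x)\<^sup>2 + (d\<psi> x)\<^sup>2"
        by (simp add: power2_eq_square algebra_simps)
    qed
    also have "\<dots> = \<alpha>\<^sup>2 * L\<^sup>2 * A + B"
      using int_p2[OF H pos] int_d2[OF H pos] unfolding A_def B_def by (subst set_integral_add) auto
    finally show ?thesis .
  qed
  have fin: "I \<le> \<alpha> * A + \<alpha>\<^sup>2 * L\<^sup>2 * A + B"
  proof (rule ccontr)
    assume "\<not> ?thesis"
    then have del: "I - (\<alpha> * A + \<alpha>\<^sup>2 * L\<^sup>2 * A + B) > 0" by simp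
    obtain n :: nat where nn: "2 * \<alpha> * L\<^sup>2 * B / (I - (\<alpha> * A + \<alpha>\<^sup>2 * L\<^sup>2 * A + B)) < real n"
      using reals_Archimedean2 by blast
    have "0 \<le> 2 * \<alpha> * L\<^sup>2 * B / (I - (\<alpha> * A + \<alpha>\<^sup>2 * L\<^sup>2 * A + B))"
      using del B0 assms(2) by simp
    then have n: "n > 0" using nn by linarith
    have "2 * \<alpha> * L\<^sup>2 * B < real n * (I - (\<alpha> * A + \<alpha>\<^sup>2 * L\<^sup>2 * A + B))"
      using nn del by (simp add: divide_less_eq mult.commute)
    then have "2 * \<alpha> * L\<^sup>2 * B / real n < I - (\<alpha> * A + \<alpha>\<^sup>2 * L\<^sup>2 * A + B)"
      using n by (simp add: divide_less_eq mult.commute)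
    moreover have "\<alpha> * L * (2 * (L / real n) * B) = 2 * \<alpha> * L\<^sup>2 * B / real n"
      by (simp add: power2_eq_square)
    moreover have "I \<le> \<alpha> * A + (\<alpha> * L * J + \<alpha> * L * (2 * (L / real n) * B))"
      using key[OF n] by (simp only: distrib_left)
    ultimately show False using JB by linarith
  qed
  show ?thesis
    using fin unfolding I_def A_def B_def Icc_Ico by (simp add: algebra_simps)
qed

end
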